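(* Let $S$ be a finite set of points in the plane whose convex hull is the triangle $ABC$ with $A,B,C\in S$, and suppose $S$ contains at least two points other than $A,B,C$. Let $A_1$ be a point of $S\setminus\{A,B,C\}$ at maximum distance from the line $BC$ among the points of $S\setminus\{A,B,C\}$, and let $A_2$ be a point of $S\setminus\{A,B,C,A_1\}$ at maximum distance from the line $BC$ among the points of $S\setminus\{A,B,C,A_1\}$. Then every triangulation of $S$ contains at least one of the segments $A_1A_2$ or $AA_2$ as an edge.
   Context: A triangulation of a finite planar point set $S$ is a maximal set of straight line segments whose endpoints are in $S$, which contain no point of $S$ other than their endpoints, and any two of which meet at most in a common endpoint. *)

theory Defs
  imports "HOL-Analysis.Analysis"
begin

text \<open>An edge (straight line segment) with endpoints in S is represented by the
  two-element set of its endpoints; the segment itself is its convex hull.\<close>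

definition seg_edge :: "(real^2) set \<Rightarrow> (real^2) set \<Rightarrow> bool" where
  "seg_edge S e \<longleftrightarrow> (\<exists>p q. e = {p, q} \<and> p \<noteq> q \<and> p \<in> S \<and> q \<in> S
      \<and> closed_segment p q \<inter> S = {p, q})"

definition noncrossing :: "(real^2) set set \<Rightarrow> bool" where
  "noncrossing T \<longleftrightarrow> (\<forall>e\<in>T. \<forall>f\<in>T. e \<noteq> f \<longrightarrow> convex hull e \<inter> convex hull f \<subseteq> e \<inter> f)"

definition seg_family :: "(real^2) set \<Rightarrow> (real^2) set set \<Rightarrow> bool" where
  "seg_family S T \<longleftrightarrow> (\<forall>e\<in>T. seg_edge S e) \<and> noncrossing T"

definition triangulation :: "(real^2) set \<Rightarrow> (real^2) set set \<Rightarrow> bool" where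
  "triangulation S T \<longleftrightarrow> seg_family S T \<and> (\<forall>T'. seg_family S T' \<and> T \<subseteq> T' \<longrightarrow> T' = T)"

end

theory Submission
  imports Defs
begin


lemma dist2: "dist (x::real^2) y = sqrt ((x$1-y$1)^2 + (x$2-y$2)^2)"
  by (simp add: dist_norm norm_eq_sqrt_inner inner_vec_def sum_2 power2_eq_square)

lemma cross_le:
  fixes w1 w2 c1 c2 :: real
  shows "\<bar>w1*c2 - w2*c1\<bar> \<le> sqrt (w1^2+w2^2) * sqrt (c1^2+c2^2)"
proof -
  have "(w1*c2 - w2*c1)^2 \<le> (w1^2+w2^2) * (c1^2+c2^2)"
  proof -
    have "(w1^2+w2^2) * (c1^2+c2^2) - (w1*c2 - w2*c1)^2 = (w1*c1+w2*c2)^2"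
      by (simp add: algebra_simps power2_eq_square)
    thus ?thesis by (smt (verit) zero_le_power2)
  qed
  hence "sqrt ((w1*c2 - w2*c1)^2) \<le> sqrt ((w1^2+w2^2) * (c1^2+c2^2))"
    using real_sqrt_le_mono by blast
  thus ?thesis by (simp add: real_sqrt_mult)
qed

lemma line_infdist:
  fixes B C z :: "real^2"
  assumes "B \<noteq> C"
  shows "infdist z (affine hull {B,C}) =
     \<bar>(z$1 - B$1)*(C$2-B$2) - (z$2-B$2)*(C$1-B$1)\<bar> / sqrt ((C$1-B$1)^2 + (C$2-B$2)^2)"
proof -
  define c1 where "c1 = C$1-B$1"
  define c2 where "c2 = C$2-B$2"
  define w1 where "w1 = z$1-B$1"
  define w2 where "w2 = z$2-B$2"
  define N where "N = c1^2+c2^2"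
  have "c1 \<noteq> 0 \<or> c2 \<noteq> 0"
    using assms by (auto simp: c1_def c2_def vec_eq_iff forall_2)
  hence Npos: "N > 0" unfolding N_def by (auto simp: sum_power2_gt_zero_iff)
  have ne: "affine hull {B,C} \<noteq> {}" by simp
  have lower: "\<bar>w1*c2 - w2*c1\<bar> / sqrt N \<le> dist z y" if yin: "y \<in> affine hull {B,C}" for y
  proof -
    obtain u v where uv: "y = u *\<^sub>R B + v *\<^sub>R C" "u + v = 1"
      using yin unfolding affine_hull_2 by blast
    have y1: "y$1 = B$1 + v * c1" and y2: "y$2 = B$2 + v * c2"
    proof -
      have u: "u = 1 - v" using uv(2) by simp
      show "y$1 = B$1 + v * c1" "y$2 = B$2 + v * c2" by (simp_all add: uv(1) u c1_def c2_def algebra_simps)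
    qed
    have eq: "w1*c2 - w2*c1 = (z$1-y$1)*c2 - (z$2-y$2)*c1"
      by (simp add: y1 y2 w1_def w2_def algebra_simps)
    have "\<bar>w1*c2 - w2*c1\<bar> \<le> sqrt ((z$1-y$1)^2+(z$2-y$2)^2) * sqrt N"
      unfolding eq N_def by (rule cross_le)
    thus ?thesis using Npos by (simp add: dist2 divide_le_eq)
  qed
  define t where "t = (w1*c1 + w2*c2)/N"
  define y0 where "y0 = (1-t) *\<^sub>R B + t *\<^sub>R C"
  have y0in: "y0 \<in> affine hull {B,C}" unfolding affine_hull_2 y0_def by (rule CollectI, rule exI[of _ "1-t"], rule exI[of _ t]) simp
  have "(z$1-y0$1)^2 + (z$2-y0$2)^2 = (w1 - t*c1)^2 + (w2 - t*c2)^2"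
    by (simp add: y0_def w1_def w2_def c1_def c2_def algebra_simps)
  also have "\<dots> = (w1*c2 - w2*c1)^2 / N"
  proof -
    have tN: "t * N = w1*c1 + w2*c2" unfolding t_def using Npos by simp
    have "N * ((w1 - t*c1)^2 + (w2 - t*c2)^2) = N*(w1^2+w2^2) - 2*(t*N)*(w1*c1 + w2*c2) + (t*N)^2"
      unfolding N_def by (simp add: power2_eq_square algebra_simps)
    also have "\<dots> = (w1*c2 - w2*c1)^2"
      unfolding tN unfolding N_def by (simp add: power2_eq_square algebra_simps)
    finally show ?thesis using Npos by (simp add: field_simps)
  qed
  finally have "dist z y0 = sqrt ((w1*c2 - w2*c1)^2 / N)" by (simp add: dist2)
  also have "\<dots> = \<bar>w1*c2 - w2*c1\<bar> / sqrt N" by (simp add: real_sqrt_divide)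
  finally have upper: "dist z y0 = \<bar>w1*c2 - w2*c1\<bar> / sqrt N" .
  have "infdist z (affine hull {B,C}) = \<bar>w1*c2 - w2*c1\<bar> / sqrt N"
  proof (rule antisym)
    show "infdist z (affine hull {B,C}) \<le> \<bar>w1*c2 - w2*c1\<bar> / sqrt N"
      using infdist_le[OF y0in, of z] upper by simp
    show "\<bar>w1*c2 - w2*c1\<bar> / sqrt N \<le> infdist z (affine hull {B,C})"
      unfolding infdist_notempty[OF ne] by (rule cINF_greatest[OF ne lower])
  qed
  thus ?thesis by (simp add: w1_def w2_def c1_def c2_def N_def)
qed

lemma max_cross:
  assumes tri: "triangulation S T" and "p \<in> S" "q \<in> S" "p \<noteq> q"
    and seg: "closed_segment p q \<inter> S = {p,q}" and nT: "{p,q} \<notin> T"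
  shows "\<exists>u v y. {u,v} \<in> T \<and> u \<noteq> v \<and> u \<in> S \<and> v \<in> S \<and> closed_segment u v \<inter> S = {u,v}
     \<and> y \<in> closed_segment u v \<and> y \<in> closed_segment p q \<and> y \<notin> {u,v} \<inter> {p,q}"
proof -
  have fam: "seg_family S T" and mx: "\<And>T'. seg_family S T' \<Longrightarrow> T \<subseteq> T' \<Longrightarrow> T' = T"
    using tri unfolding triangulation_def by auto
  have edges: "\<forall>e\<in>T. seg_edge S e" and nc: "noncrossing T" using fam unfolding seg_family_def by auto
  have epq: "seg_edge S {p,q}" unfolding seg_edge_def using assms by blast
  have "\<not> seg_family S (insert {p,q} T)"
  proof
    assume "seg_family S (insert {p,q} T)"
    hence "insert {p,q} T = T" using mx by blast
    thus False using nT by blast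
  qed
  hence "\<not> noncrossing (insert {p,q} T)" using edges epq unfolding seg_family_def by blast
  then obtain e f where ef: "e \<in> insert {p,q} T" "f \<in> insert {p,q} T" "e \<noteq> f"
    "\<not> (convex hull e \<inter> convex hull f \<subseteq> e \<inter> f)"
    unfolding noncrossing_def by blast
  have "\<exists>g\<in>T. \<not> (convex hull g \<inter> convex hull {p,q} \<subseteq> g \<inter> {p,q})"
  proof (cases "e \<in> T \<and> f \<in> T")
    case True
    thus ?thesis using nc ef unfolding noncrossing_def by blast
  next
    case False
    then consider "e = {p,q}" "f \<in> T" | "f = {p,q}" "e \<in> T" using ef by blast
    thus ?thesis
    proof cases
      case 1 thus ?thesis using ef by (metis Int_commute)
    next
      case 2 thus ?thesis using ef by metis
    qed
  qed
  then obtain g where g: "g \<in> T" "\<not> (convex hull g \<inter> convex hull {p,q} \<subseteq> g \<inter> {p,q})" by blast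
  obtain u v where uv: "g = {u,v}" "u \<noteq> v" "u \<in> S" "v \<in> S" "closed_segment u v \<inter> S = {u,v}"
    using edges g(1) unfolding seg_edge_def by blast
  show ?thesis using g uv unfolding segment_convex_hull by blast
qed

lemma ray:
  fixes q v p y :: "real^2"
  assumes "y \<noteq> q" "y \<in> closed_segment q v" "y \<in> closed_segment q p"
  shows "v \<in> closed_segment q p \<or> p \<in> closed_segment q v"
proof -
  obtain a where a: "0 \<le> a" "a \<le> 1" "y = (1-a) *\<^sub>R q + a *\<^sub>R v" using assms(2) unfolding in_segment by blast
  obtain b where b: "0 \<le> b" "b \<le> 1" "y = (1-b) *\<^sub>R q + b *\<^sub>R p" using assms(3) unfolding in_segment by blast
  have a0: "a \<noteq> 0" using a assms(1) by auto
  have b0: "b \<noteq> 0" using b assms(1) by auto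
  have eq: "\<And>i. a * v$i = (a - b) * q$i + b * p$i"
  proof -
    fix i
    have e1: "y$i = (1-a) * q$i + a * v$i" by (simp add: a(3))
    have e2: "y$i = (1-b) * q$i + b * p$i" by (simp add: b(3))
    from e1 e2 show "a * v$i = (a - b) * q$i + b * p$i" by (simp add: algebra_simps)
  qed
  show ?thesis
  proof (cases "b \<le> a")
    case True
    have "v = (1 - b/a) *\<^sub>R q + (b/a) *\<^sub>R p"
    proof (rule iffD2[OF vec_eq_iff], rule allI)
      fix i
      show "v$i = ((1 - b/a) *\<^sub>R q + (b/a) *\<^sub>R p)$i"
        using eq[of i] a0 by (simp add: field_simps)
    qed
    moreover have "0 \<le> b/a" "b/a \<le> 1" using True a b a0 by auto
    ultimately show ?thesis unfolding in_segment by blast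
  next
    case False
    have "p = (1 - a/b) *\<^sub>R q + (a/b) *\<^sub>R v"
    proof (rule iffD2[OF vec_eq_iff], rule allI)
      fix i
      show "p$i = ((1 - a/b) *\<^sub>R q + (a/b) *\<^sub>R v)$i"
        using eq[of i] b0 by (simp add: field_simps)
    qed
    moreover have "0 \<le> a/b" "a/b \<le> 1" using False a b b0 by auto
    ultimately show ?thesis unfolding in_segment by blast
  qed
qed

definition haffine :: "(real^2 \<Rightarrow> real) \<Rightarrow> bool" where
  "haffine h \<longleftrightarrow> (\<forall>x y t. h ((1-t) *\<^sub>R x + t *\<^sub>R y) = (1-t) * h x + t * h y)"

lemma seg_le_max:
  assumes "haffine h" "y \<in> closed_segment u v"
  shows "h y \<le> max (h u) (h v)" "min (h u) (h v) \<le> h y"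
proof -
  obtain a where a: "0 \<le> a" "a \<le> 1" "y = (1-a) *\<^sub>R u + a *\<^sub>R v" using assms(2) unfolding in_segment by blast
  have hy: "h y = (1-a) * h u + a * h v" using assms(1) a unfolding haffine_def by simp
  have "(1-a) * h u \<le> (1-a) * max (h u) (h v)" "a * h v \<le> a * max (h u) (h v)"
    using a by (auto intro: mult_left_mono)
  thus "h y \<le> max (h u) (h v)" using hy by (simp add: algebra_simps)
  have "(1-a) * min (h u) (h v) \<le> (1-a) * h u" "a * min (h u) (h v) \<le> a * h v"
    using a by (auto intro: mult_left_mono)
  thus "min (h u) (h v) \<le> h y" using hy by (simp add: algebra_simps)
qed

lemma seg_gt:
  assumes "haffine h" "y \<in> closed_segment p q" "h p < h q"
  shows "y \<noteq> p \<Longrightarrow> h p < h y" "y \<noteq> q \<Longrightarrow> h y < h q"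
proof -
  obtain a where a: "0 \<le> a" "a \<le> 1" "y = (1-a) *\<^sub>R p + a *\<^sub>R q" using assms(2) unfolding in_segment by blast
  have "h ((1-a) *\<^sub>R p + a *\<^sub>R q) = (1-a) * h p + a * h q" using assms(1) unfolding haffine_def by blast
  hence "h y = (1-a) * h p + a * h q" using a(3) by simp
  hence hy: "h y = h p + a * (h q - h p)" by (simp add: algebra_simps)
  show "y \<noteq> p \<Longrightarrow> h p < h y"
  proof -
    assume "y \<noteq> p" hence "a \<noteq> 0" using a by auto
    hence "a > 0" using a by auto
    thus ?thesis using hy assms(3) by simp
  qed
  show "y \<noteq> q \<Longrightarrow> h y < h q"
  proof -
    assume "y \<noteq> q" hence "a \<noteq> 1" using a by auto
    hence "1 - a > 0" using a by auto
    hence "(1 - a) * (h q - h p) > 0" using assms(3) by simp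
    thus ?thesis using hy by (simp add: algebra_simps)
  qed
qed

lemma step:
  assumes tri: "triangulation S T" and ha: "haffine h"
    and PS: "P \<in> S" and qS: "q \<in> S" and Pq: "P \<noteq> q"
    and seg: "closed_segment P q \<inter> S = {P,q}" and nT: "{P,q} \<notin> T" and hPq: "h P < h q"
  shows "\<exists>u v y. {u,v} \<in> T \<and> u \<noteq> v \<and> u \<in> S \<and> v \<in> S \<and> closed_segment u v \<inter> S = {u,v}
     \<and> h P < h u \<and> u \<noteq> q \<and> y \<in> closed_segment u v \<and> y \<in> closed_segment P q
     \<and> y \<noteq> P \<and> y \<noteq> q \<and> y \<noteq> u \<and> y \<noteq> v"
proof -
  obtain u v y where uv: "{u,v} \<in> T" "u \<noteq> v" "u \<in> S" "v \<in> S" "closed_segment u v \<inter> S = {u,v}"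
    and y: "y \<in> closed_segment u v" "y \<in> closed_segment P q" "y \<notin> {u,v} \<inter> {P,q}"
    using max_cross[OF tri PS qS Pq seg nT] by blast
  have yP: "y \<noteq> P"
  proof
    assume "y = P" hence "P \<in> {u,v}" using y(1) uv(5) PS by blast
    thus False using y(3) \<open>y = P\<close> by blast
  qed
  have yq: "y \<noteq> q"
  proof
    assume "y = q" hence "q \<in> {u,v}" using y(1) uv(5) qS by blast
    thus False using y(3) \<open>y = q\<close> by blast
  qed
  have yS: "y \<notin> S" using y(2) seg yP yq by blast
  have yuv: "y \<noteq> u" "y \<noteq> v" using yS uv by auto
  have hy: "h P < h y" using seg_gt(1)[OF ha y(2) hPq yP] .
  have "h y \<le> max (h u) (h v)" using seg_le_max(1)[OF ha y(1)] .
  hence hor: "h P < h u \<or> h P < h v" using hy by linarith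
  have noq: False if w: "w \<in> {u,v}" "w = q" for w
  proof -
    obtain w' where w': "{u,v} = {q,w'}" "w' \<noteq> q" "w' \<in> S"
      using w uv by auto
    have "y \<in> closed_segment q w'" using y(1) w'(1)
      by (metis closed_segment_commute doubleton_eq_iff)
    moreover have "y \<in> closed_segment q P" using y(2) by (simp add: closed_segment_commute)
    ultimately have "w' \<in> closed_segment q P \<or> P \<in> closed_segment q w'"
      using ray[OF yq] by blast
    moreover have "closed_segment q w' \<inter> S = {q,w'}" using uv(5) w'(1)
      by (metis closed_segment_commute doubleton_eq_iff)
    ultimately have "w' = P"
      using seg w' PS Pq by (auto simp: closed_segment_commute)
    hence "{P,q} \<in> T" using uv(1) w'(1) by (simp add: insert_commute)
    thus False using nT by blast
  qed
  show ?thesis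
  proof (cases "h P < h u")
    case True
    thus ?thesis using uv y yP yq yuv noq by blast
  next
    case False
    hence "h P < h v" using hor by blast
    moreover have "{v,u} \<in> T" "closed_segment v u \<inter> S = {v,u}" "y \<in> closed_segment v u"
      using uv y by (auto simp: insert_commute closed_segment_commute)
    ultimately show ?thesis using uv y yP yq yuv noq by blast
  qed
qed

definition det2 :: "real^2 \<Rightarrow> real^2 \<Rightarrow> real^2 \<Rightarrow> real" where
  "det2 P A A1 = (A$1 - P$1)*(A1$2 - P$2) - (A$2 - P$2)*(A1$1 - P$1)"

lemma indep:
  assumes "det2 P A A1 \<noteq> 0"
    and "\<And>i. \<mu> * (A$i - P$i) + \<nu> * (A1$i - P$i) = 0"
  shows "\<mu> = 0 \<and> \<nu> = 0"
proof -
  define D where "D = det2 P A A1"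
  have e1: "\<mu> * (A$1 - P$1) + \<nu> * (A1$1 - P$1) = 0" and e2: "\<mu> * (A$2 - P$2) + \<nu> * (A1$2 - P$2) = 0"
    using assms(2) by auto
  have "\<mu> * D = (A1$2 - P$2) * (\<mu> * (A$1 - P$1) + \<nu> * (A1$1 - P$1)) - (A1$1 - P$1) * (\<mu> * (A$2 - P$2) + \<nu> * (A1$2 - P$2))"
    unfolding D_def det2_def by (simp add: algebra_simps)
  hence m: "\<mu> * D = 0" using e1 e2 by simp
  have "\<nu> * D = (A$1 - P$1) * (\<mu> * (A$2 - P$2) + \<nu> * (A1$2 - P$2)) - (A$2 - P$2) * (\<mu> * (A$1 - P$1) + \<nu> * (A1$1 - P$1))"
    unfolding D_def det2_def by (simp add: algebra_simps)
  hence n: "\<nu> * D = 0" using e1 e2 by simp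
  show ?thesis using m n assms(1) unfolding D_def by simp
qed

lemma noncol:
  assumes "det2 P A A1 = 0" "A \<noteq> P" "haffine h" "h P < h A1" "h A1 < h A"
  shows "A1 \<in> closed_segment P A"
proof -
  have "\<exists>c. A1 = (1-c) *\<^sub>R P + c *\<^sub>R A"
  proof (cases "A$1 - P$1 = 0")
    case False
    define c where "c = (A1$1 - P$1) / (A$1 - P$1)"
    have "A1 = (1-c) *\<^sub>R P + c *\<^sub>R A"
    proof (rule iffD2[OF vec_eq_iff], rule allI)
      fix i :: 2
      have c1: "A1$1 = P$1 + c * (A$1 - P$1)" using False unfolding c_def by simp
      have "(A$1 - P$1) * (A1$2 - P$2) = (A$2 - P$2) * (A1$1 - P$1)" using assms(1) unfolding det2_def by simp
      hence "(A$1 - P$1) * (A1$2 - P$2) = (A$1 - P$1) * (c * (A$2 - P$2))" using c1 by (simp add: algebra_simps)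
      hence c2: "A1$2 = P$2 + c * (A$2 - P$2)" using False by simp
      show "A1$i = ((1-c) *\<^sub>R P + c *\<^sub>R A)$i"
        using c1 c2 exhaust_2[of i] by (auto simp: algebra_simps)
    qed
    thus ?thesis by blast
  next
    case True
    hence F: "A$2 - P$2 \<noteq> 0" using assms(2) by (auto simp: vec_eq_iff forall_2)
    define c where "c = (A1$2 - P$2) / (A$2 - P$2)"
    have "A1 = (1-c) *\<^sub>R P + c *\<^sub>R A"
    proof (rule iffD2[OF vec_eq_iff], rule allI)
      fix i :: 2
      have c2: "A1$2 = P$2 + c * (A$2 - P$2)" using F unfolding c_def by simp
      have "(A$2 - P$2) * (A1$1 - P$1) = (A$1 - P$1) * (A1$2 - P$2)" using assms(1) unfolding det2_def by simp
      hence "(A$2 - P$2) * (A1$1 - P$1) = (A$2 - P$2) * (c * (A$1 - P$1))" using c2 by (simp add: algebra_simps)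
      hence c1: "A1$1 = P$1 + c * (A$1 - P$1)" using F by simp
      show "A1$i = ((1-c) *\<^sub>R P + c *\<^sub>R A)$i"
        using c1 c2 exhaust_2[of i] by (auto simp: algebra_simps)
    qed
    thus ?thesis by blast
  qed
  then obtain c where c: "A1 = (1-c) *\<^sub>R P + c *\<^sub>R A" by blast
  have "h A1 = (1-c) * h P + c * h A" using assms(3) unfolding c haffine_def by blast
  hence hc: "h A1 - h P = c * (h A - h P)" by (simp add: algebra_simps)
  have "0 < c" using hc assms(4,5) by (smt (verit) mult_nonpos_nonneg)
  moreover have "c < 1" using hc assms(4,5)
    by (smt (verit) mult_le_cancel_right1)
  ultimately show ?thesis unfolding in_segment using c by (intro exI[of _ c]) auto
qed

lemma key_id:
  fixes a b p s t :: real
  assumes "1 - t * s \<noteq> 0"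
  shows "(1 - (1-t)/(1-t * s)) * b + (1-t)/(1-t * s) * ((1-s) * p + s * a)
       = (1 - (1-s)/(1-t * s)) * a + (1-s)/(1-t * s) * ((1-t) * p + t * b)"
proof -
  define D where "D = 1 - t * s"
  define al where "al = (1-t)/D"
  define be where "be = (1-s)/D"
  have h1: "D * al = 1 - t" unfolding al_def D_def using assms by simp
  have h2: "D * be = 1 - s" unfolding be_def D_def using assms by simp
  have "D * ((1 - al) * b + al * ((1-s) * p + s * a)) = D * b - (D * al) * b + (D * al) * ((1-s) * p + s * a)"
    by (simp add: algebra_simps)
  also have "\<dots> = D * b - (1 - t) * b + (1 - t) * ((1-s) * p + s * a)"
    by (simp only: h1)
  also have "\<dots> = D * a - (1 - s) * a + (1 - s) * ((1-t) * p + t * b)"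
    unfolding D_def by (simp add: algebra_simps)
  also have "\<dots> = D * a - (D * be) * a + (D * be) * ((1-t) * p + t * b)"
    by (simp only: h2)
  also have "\<dots> = D * ((1 - be) * a + be * ((1-t) * p + t * b))"
    by (simp add: algebra_simps)
  finally have "(1 - al) * b + al * ((1-s) * p + s * a) = (1 - be) * a + be * ((1-t) * p + t * b)"
    using assms unfolding D_def by simp
  thus ?thesis unfolding al_def be_def D_def .
qed

lemma comb_ne:
  fixes a b :: "real^2"
  assumes "a \<noteq> b" "0 < u" "u < 1"
  shows "(1-u) *\<^sub>R a + u *\<^sub>R b \<noteq> a" "(1-u) *\<^sub>R a + u *\<^sub>R b \<noteq> b"
proof -
  show "(1-u) *\<^sub>R a + u *\<^sub>R b \<noteq> a"
  proof
    assume "(1-u) *\<^sub>R a + u *\<^sub>R b = a"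
    hence "u *\<^sub>R (b - a) = 0" by (simp add: algebra_simps)
    thus False using assms by simp
  qed
  show "(1-u) *\<^sub>R a + u *\<^sub>R b \<noteq> b"
  proof
    assume "(1-u) *\<^sub>R a + u *\<^sub>R b = b"
    hence "(1-u) *\<^sub>R (a - b) = 0" by (simp add: algebra_simps)
    thus False using assms by simp
  qed
qed

lemma get_param:
  fixes x a b :: "real^2"
  assumes "x \<in> closed_segment a b" "x \<noteq> a" "x \<noteq> b"
  obtains u where "0 < u" "u < 1" "x = (1-u) *\<^sub>R a + u *\<^sub>R b"
proof -
  obtain u where u: "0 \<le> u" "u \<le> 1" "x = (1-u) *\<^sub>R a + u *\<^sub>R b" using assms(1) unfolding in_segment by blast
  have "u \<noteq> 0" using u assms(2) by auto
  moreover have "u \<noteq> 1" using u assms(3) by auto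
  ultimately show ?thesis using that[of u] u by auto
qed

lemma cevian:
  fixes P A A1 v v' x x' :: "real^2"
  assumes D: "det2 P A A1 \<noteq> 0"
    and x: "x \<in> closed_segment A1 v" "x \<in> closed_segment P A" "x \<noteq> P" "x \<noteq> A" "x \<noteq> A1" "x \<noteq> v"
    and x': "x' \<in> closed_segment A v'" "x' \<in> closed_segment P A1" "x' \<noteq> P" "x' \<noteq> A1" "x' \<noteq> A" "x' \<noteq> v'"
    and A1v: "A1 \<noteq> v"
  shows "\<exists>y. y \<in> closed_segment A1 v \<and> y \<in> closed_segment A v' \<and> y \<noteq> A1 \<and> y \<noteq> v"
    and "{A1,v} \<noteq> {A,v'}"
proof -
  obtain s where s: "0 < s" "s < 1" "x = (1-s) *\<^sub>R P + s *\<^sub>R A" using get_param[OF x(2,3,4)] by blast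
  obtain t where t: "0 < t" "t < 1" "x' = (1-t) *\<^sub>R P + t *\<^sub>R A1" using get_param[OF x'(2,3,4)] by blast
  obtain g where g: "0 < g" "g < 1" "x = (1-g) *\<^sub>R A1 + g *\<^sub>R v" using get_param[OF x(1,5,6)] by blast
  obtain d where d: "0 < d" "d < 1" "x' = (1-d) *\<^sub>R A + d *\<^sub>R v'" using get_param[OF x'(1,5,6)] by blast
  have ts: "t * s < 1" using s t by (smt (verit) mult_less_cancel_right2)
  hence ts0: "1 - t * s \<noteq> 0" "1 - t * s > 0" by auto
  define \<alpha> where "\<alpha> = (1-t)/(1-t * s)"
  define \<beta> where "\<beta> = (1-s)/(1-t * s)"
  have al: "0 < \<alpha>" "\<alpha> < 1" unfolding \<alpha>_def using ts0 s t by (auto simp: field_simps)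
  have be: "0 < \<beta>" "\<beta> < 1" unfolding \<beta>_def using ts0 s t by (auto simp: field_simps)
  have "\<alpha> * g < \<alpha>" using al g by simp
  hence ag: "0 < \<alpha> * g" "\<alpha> * g < 1" using al g by (simp, linarith)
  have "\<beta> * d < \<beta>" using be d by simp
  hence bd: "0 < \<beta> * d" "\<beta> * d < 1" using be d by (simp, linarith)
  define y where "y = (1-\<alpha>*g) *\<^sub>R A1 + (\<alpha>*g) *\<^sub>R v"
  have y1: "y \<in> closed_segment A1 v" unfolding y_def in_segment using ag
    by (intro exI[of _ "\<alpha>*g"]) auto
  have yeq: "y = (1-\<beta>*d) *\<^sub>R A + (\<beta>*d) *\<^sub>R v'"
  proof (rule iffD2[OF vec_eq_iff], rule allI)
    fix i
    have xi1: "x$i = (1-s) * P$i + s * A$i" by (simp add: s(3))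
    have xi2: "x$i = (1-g) * A1$i + g * v$i" by (simp add: g(3))
    have xi3: "x'$i = (1-t) * P$i + t * A1$i" by (simp add: t(3))
    have xi4: "x'$i = (1-d) * A$i + d * v'$i" by (simp add: d(3))
    have "y$i = (1-\<alpha>) * A1$i + \<alpha> * x$i" unfolding y_def xi2 by (simp add: algebra_simps)
    also have "\<dots> = (1-\<alpha>) * A1$i + \<alpha> * ((1-s) * P$i + s * A$i)" using xi1 by simp
    also have "\<dots> = (1-\<beta>) * A$i + \<beta> * ((1-t) * P$i + t * A1$i)"
      unfolding \<alpha>_def \<beta>_def by (rule key_id[OF ts0(1)])
    also have "\<dots> = (1-\<beta>) * A$i + \<beta> * x'$i" using xi3 by simp
    also have "\<dots> = ((1-\<beta>*d) *\<^sub>R A + (\<beta>*d) *\<^sub>R v')$i" unfolding xi4 by (simp add: algebra_simps)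
    finally show "y$i = ((1-\<beta>*d) *\<^sub>R A + (\<beta>*d) *\<^sub>R v')$i" .
  qed
  have y2: "y \<in> closed_segment A v'" unfolding yeq in_segment using bd
    by (intro exI[of _ "\<beta>*d"]) auto
  have "y \<noteq> A1" "y \<noteq> v" unfolding y_def using comb_ne[OF A1v ag] by auto
  thus "\<exists>y. y \<in> closed_segment A1 v \<and> y \<in> closed_segment A v' \<and> y \<noteq> A1 \<and> y \<noteq> v"
    using y1 y2 by blast
  have AA1: "A1 \<noteq> A" using D unfolding det2_def by auto
  show "{A1,v} \<noteq> {A,v'}"
  proof
    assume "{A1,v} = {A,v'}"
    hence vA: "v = A" using AA1 by (auto simp: doubleton_eq_iff)
    have "(s - g) = 0 \<and> (-(1-g)) = 0"
    proof (rule indep[OF D])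
      fix i
      have "x$i = (1-s) * P$i + s * A$i" by (simp add: s(3))
      moreover have "x$i = (1-g) * A1$i + g * A$i" by (simp add: g(3) vA)
      ultimately show "(s - g) * (A$i - P$i) + (-(1-g)) * (A1$i - P$i) = 0" by (simp add: algebra_simps)
    qed
    thus False using g by simp
  qed
qed

lemma mainM:
  assumes tri: "triangulation S T" and ha: "haffine h"
    and PS: "P \<in> S" and AS: "A \<in> S" and A1S: "A1 \<in> S"
    and PA: "P \<noteq> A" and A1A: "A1 \<noteq> A" and A1P: "A1 \<noteq> P"
    and hPA: "h P < h A" and hA1A: "h A1 < h A"
    and U: "\<forall>z\<in>S. h P < h z \<longrightarrow> z = A \<or> z = A1"
  shows "{A1,P} \<in> T \<or> {A,P} \<in> T"
proof (rule ccontr)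
  assume "\<not> ?thesis"
  hence n1: "{P,A1} \<notin> T" and n2: "{P,A} \<notin> T" by (auto simp: insert_commute)
  have nc: "noncrossing T" using tri unfolding triangulation_def seg_family_def by blast
  show False
  proof (cases "h A1 \<le> h P")
    case True
    have seg: "closed_segment P A \<inter> S = {P,A}"
    proof
      show "{P,A} \<subseteq> closed_segment P A \<inter> S" using PS AS by auto
      show "closed_segment P A \<inter> S \<subseteq> {P,A}"
      proof
        fix z assume z: "z \<in> closed_segment P A \<inter> S"
        show "z \<in> {P,A}"
        proof (cases "z = P")
          case False
          hence "h P < h z" using seg_gt(1)[OF ha _ hPA] z by blast
          hence "z = A \<or> z = A1" using U z by blast
          thus ?thesis using True \<open>h P < h z\<close> by auto
        qed simp
      qed
    qed
    obtain u where "u \<in> S" "h P < h u" "u \<noteq> A" using step[OF tri ha PS AS PA seg n2 hPA] by blast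
    thus False using U True by force
  next
    case False
    hence hPA1: "h P < h A1" by simp
    have seg1: "closed_segment P A1 \<inter> S = {P,A1}"
    proof
      show "{P,A1} \<subseteq> closed_segment P A1 \<inter> S" using PS A1S by auto
      show "closed_segment P A1 \<inter> S \<subseteq> {P,A1}"
      proof
        fix z assume z: "z \<in> closed_segment P A1 \<inter> S"
        show "z \<in> {P,A1}"
        proof (cases "z = P")
          case False
          hence "h P < h z" using seg_gt(1)[OF ha _ hPA1] z by blast
          hence "z = A \<or> z = A1" using U z by blast
          moreover have hz: "h z \<le> max (h P) (h A1)" using seg_le_max(1)[OF ha] z by blast
          moreover have "z \<noteq> A"
          proof
            assume "z = A"
            hence "h A \<le> max (h P) (h A1)" using hz by simp
            thus False using hPA hA1A by (simp add: max_def split: if_splits)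
          qed
          ultimately show ?thesis by simp
        qed simp
      qed
    qed
    obtain u v' x' where e': "{u,v'} \<in> T" "u \<noteq> v'" "u \<in> S" "v' \<in> S" "closed_segment u v' \<inter> S = {u,v'}"
      "h P < h u" "u \<noteq> A1" "x' \<in> closed_segment u v'" "x' \<in> closed_segment P A1" "x' \<noteq> P" "x' \<noteq> A1"
      "x' \<noteq> u" "x' \<noteq> v'"
      using step[OF tri ha PS A1S A1P[symmetric] seg1 n1 hPA1] by blast
    have uA: "u = A" using U e'(3,6,7) by blast
    note e' = e'[unfolded uA]
    have v'A1: "v' \<noteq> A1"
    proof
      assume "v' = A1"
      hence "min (h A) (h A1) \<le> h x'" using seg_le_max(2)[OF ha e'(8)] by simp
      moreover have "h x' < h A1" using seg_gt(2)[OF ha e'(9) hPA1 e'(11)] .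
      ultimately show False using hA1A by simp
    qed
    show False
    proof (cases "A1 \<in> closed_segment P A")
      case True
      have "closed_segment P A1 \<subseteq> closed_segment P A" using True by (simp add: subset_closed_segment)
      hence x'PA: "x' \<in> closed_segment A P" using e'(9) by (auto simp: closed_segment_commute)
      have A1n: "A1 \<notin> closed_segment A v'" using e'(5) A1S A1A v'A1 by blast
      have "v' \<in> closed_segment A P \<or> P \<in> closed_segment A v'" using ray[OF e'(12) e'(8) x'PA] .
      moreover have "P \<noteq> v'"
      proof
        assume "P = v'"
        thus False using A1n True by (simp add: closed_segment_commute)
      qed
      ultimately have "v' \<in> closed_segment A P" using e'(5) PS PA by blast
      hence "h P < h v'" using seg_gt(1)[OF ha _ hPA, of v'] \<open>P \<noteq> v'\<close> by (simp add: closed_segment_commute)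
      thus False using U e'(4) e'(2) v'A1 by blast
    next
      case False
      have seg: "closed_segment P A \<inter> S = {P,A}"
      proof
        show "{P,A} \<subseteq> closed_segment P A \<inter> S" using PS AS by auto
        show "closed_segment P A \<inter> S \<subseteq> {P,A}"
        proof
          fix z assume z: "z \<in> closed_segment P A \<inter> S"
          show "z \<in> {P,A}"
          proof (cases "z = P")
            case zP: False
            hence "h P < h z" using seg_gt(1)[OF ha _ hPA] z by blast
            hence "z = A \<or> z = A1" using U z by blast
            thus ?thesis using False z by auto
          qed simp
        qed
      qed
      obtain u2 v x where e: "{u2,v} \<in> T" "u2 \<noteq> v" "u2 \<in> S" "v \<in> S" "closed_segment u2 v \<inter> S = {u2,v}"
        "h P < h u2" "u2 \<noteq> A" "x \<in> closed_segment u2 v" "x \<in> closed_segment P A" "x \<noteq> P" "x \<noteq> A"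
        "x \<noteq> u2" "x \<noteq> v"
        using step[OF tri ha PS AS PA seg n2 hPA] by blast
      have u2A1: "u2 = A1" using U e(3,6,7) by blast
      note e = e[unfolded u2A1]
      have D: "det2 P A A1 \<noteq> 0" using noncol[OF _ PA[symmetric] ha hPA1 hA1A] False by blast
      obtain y where y: "y \<in> closed_segment A1 v" "y \<in> closed_segment A v'" "y \<noteq> A1" "y \<noteq> v"
        using cevian(1)[OF D e(8,9,10,11,12,13) e'(8,9,10,11,12,13) e(2)] by blast
      have ne: "{A1,v} \<noteq> {A,v'}"
        using cevian(2)[OF D e(8,9,10,11,12,13) e'(8,9,10,11,12,13) e(2)] .
      have nc': "\<And>e f. e \<in> T \<Longrightarrow> f \<in> T \<Longrightarrow> e \<noteq> f \<Longrightarrow> convex hull e \<inter> convex hull f \<subseteq> e \<inter> f"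
        using nc unfolding noncrossing_def by blast
      have sub: "convex hull {A1,v} \<inter> convex hull {A,v'} \<subseteq> {A1,v} \<inter> {A,v'}"
        by (rule nc'[OF e(1) e'(1) ne])
      have "y \<in> convex hull {A1,v} \<inter> convex hull {A,v'}" using y(1,2) by (simp add: segment_convex_hull)
      hence "y \<in> {A1,v}" using sub by blast
      thus False using y(3,4) by simp
    qed
  qed
qed

theorem lemma4p3:
  fixes S :: "(real^2) set" and A B C A1 A2 :: "real^2"
  assumes "finite S"
    and "A \<in> S" "B \<in> S" "C \<in> S"
    and "\<not> collinear {A, B, C}"
    and "convex hull S = convex hull {A, B, C}"
    and "card (S - {A, B, C}) \<ge> 2"
    and "A1 \<in> S - {A, B, C}"
    and "\<forall>x\<in>S - {A, B, C}. infdist x (affine hull {B, C}) \<le> infdist A1 (affine hull {B, C})"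
    and "A2 \<in> S - {A, B, C, A1}"
    and "\<forall>x\<in>S - {A, B, C, A1}. infdist x (affine hull {B, C}) \<le> infdist A2 (affine hull {B, C})"
  shows "\<forall>T. triangulation S T \<longrightarrow> {A1, A2} \<in> T \<or> {A, A2} \<in> T"
proof (intro allI impI)
  fix T assume tri: "triangulation S T"
  have BC: "B \<noteq> C"
  proof
    assume "B = C"
    hence "{A,B,C} = {A,B}" by simp
    thus False using assms(5) collinear_2 by metis
  qed
  define g where "g z = (z$1 - B$1) * (C$2-B$2) - (z$2-B$2) * (C$1-B$1)" for z :: "real^2"
  define N where "N = sqrt ((C$1-B$1)^2 + (C$2-B$2)^2)"
  have dist: "\<And>z. infdist z (affine hull {B,C}) = \<bar>g z\<bar> / N"
    using line_infdist[OF BC] by (simp add: g_def N_def)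
  have gA: "g A \<noteq> 0"
  proof
    assume "g A = 0"
    hence "infdist A (affine hull {B,C}) = 0" using dist by simp
    hence "A \<in> affine hull {B,C}" using in_closed_iff_infdist_zero[OF closed_affine_hull, of "{B,C}"] by simp
    hence "collinear {B,C,A}" by (rule affine_hull_3_imp_collinear)
    thus False using assms(5) by (simp add: insert_commute)
  qed
  have "C$1-B$1 \<noteq> 0 \<or> C$2-B$2 \<noteq> 0"
    using BC by (auto simp: vec_eq_iff forall_2)
  hence Npos: "N > 0" unfolding N_def by (auto simp: sum_power2_gt_zero_iff)
  define h where "h z = g z / g A" for z
  have gaff: "g ((1-t) *\<^sub>R x + t *\<^sub>R y) = (1-t) * g x + t * g y" for x y t
    by (simp add: g_def algebra_simps)
  have ha: "haffine h" unfolding haffine_def h_def gaff by (simp add: add_divide_distrib)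
  have hA: "h A = 1" using gA by (simp add: h_def)
  have gB: "g B = 0" and gC: "g C = 0" by (simp_all add: g_def algebra_simps)
  have hull: "0 \<le> h z \<and> (z \<noteq> A \<longrightarrow> h z < 1) \<and> g z = g A * h z" if z: "z \<in> convex hull {A,B,C}" for z
  proof -
    obtain u v w where uvw: "z = u *\<^sub>R A + v *\<^sub>R B + w *\<^sub>R C" "0 \<le> u" "0 \<le> v" "0 \<le> w" "u + v + w = 1"
      using z unfolding convex_hull_3 by blast
    have v: "v = 1 - u - w" using uvw(5) by simp
    have gz: "g z = u * g A" unfolding uvw(1) v by (simp add: g_def algebra_simps)
    hence hz: "h z = u" using gA by (simp add: h_def)
    have "z \<noteq> A \<longrightarrow> u < 1"
    proof
      assume zA: "z \<noteq> A"
      show "u < 1"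
      proof (rule ccontr)
        assume "\<not> u < 1"
        hence "u = 1" "v = 0" "w = 0" using uvw(2,3,4,5) by linarith+
        thus False using zA uvw(1) by simp
      qed
    qed
    thus ?thesis using hz uvw(2) gz by simp
  qed
  have Sh: "S \<subseteq> convex hull {A,B,C}" unfolding assms(6)[symmetric] by (rule hull_subset)
  define K where "K = \<bar>g A\<bar> / N"
  have Kpos: "K > 0" using gA Npos by (simp add: K_def)
  have dK: "infdist z (affine hull {B,C}) = K * h z" if "z \<in> S" for z
  proof -
    have "0 \<le> h z" "g z = g A * h z" using hull Sh that by auto
    thus ?thesis unfolding dist K_def by (simp add: abs_mult)
  qed
  have A2S: "A2 \<in> S" and A1S: "A1 \<in> S" using assms(8,10) by auto
  have A2A: "A2 \<noteq> A" "A1 \<noteq> A" "A1 \<noteq> A2" using assms(8,10) by auto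
  have "A2 \<in> convex hull {A,B,C}" "A1 \<in> convex hull {A,B,C}" using Sh A2S A1S by blast+
  hence hA2: "h A2 < h A" "h A1 < h A" using hull A2A(1,2) hA by simp_all
  have U: "\<forall>z\<in>S. h A2 < h z \<longrightarrow> z = A \<or> z = A1"
  proof (intro ballI impI)
    fix z assume zS: "z \<in> S" and hz: "h A2 < h z"
    show "z = A \<or> z = A1"
    proof (rule ccontr)
      assume nz: "\<not> (z = A \<or> z = A1)"
      have "A2 \<in> convex hull {A,B,C}" using Sh A2S by blast
      hence "0 \<le> h A2" using hull by simp
      moreover have "h B = 0" "h C = 0" using gB gC by (simp_all add: h_def)
      ultimately have "z \<noteq> B" "z \<noteq> C" using hz by auto
      hence "z \<in> S - {A,B,C,A1}" using zS nz by simp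
      hence "infdist z (affine hull {B,C}) \<le> infdist A2 (affine hull {B,C})" using assms(11) by blast
      hence "K * h z \<le> K * h A2" unfolding dK[OF zS] dK[OF A2S] .
      thus False using Kpos hz by simp
    qed
  qed
  show "{A1, A2} \<in> T \<or> {A, A2} \<in> T"
    using mainM[OF tri ha A2S assms(2) A1S A2A hA2 U] .
qed

end
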